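(* Let $G=(\mathcal V,\mathcal E)$ be an undirected connected graph with $\mathcal V=\{1,\dots,n\}$ and $|\mathcal E|=m$, and consider $\dot x=f(x)$ on $\mathbb{R}^n$ with $f$ continuously differentiable, solutions defined for all $t\ge0$, and $f(x+c\mathbf{1}_n)=f(x)$ for all $x\in\mathbb{R}^n$, $c\in\mathbb{R}$. Let $v\in\mathcal I_{\mathcal E}$ and let $B_v$ be as below. The following are equivalent: (i) for every $x\in\mathbb{R}^n$ there exists $P(x)\in\mathbb{M}_m$ with $B_v^{\top}D_xf(x)=P(x)B_v^{\top}$; (ii) for every two trajectories $x(t),y(t)$ with $B_v^{\top}x(0)\le B_v^{\top}y(0)$ one has $B_v^{\top}x(t)\le B_v^{\top}y(t)$ for all $t\ge0$. Additionally, if (i) holds, $c\in\mathbb{R}$, and $\mathbf{e}\in\mathbb{R}^n$ satisfies $B_v^{\top}\mathbf{e}>0_m$, then the following are equivalent: (iii) $B_v^{\top}D_xf(x)\mathbf{e}\le -cB_v^{\top}\mathbf{e}$ for all $x\in\mathbb{R}^n$; (iv) for every two trajectories $x(t),y(t)$ and all $t\ge0$, $\|\mathrm{diag}(B_v^{\top}\mathbf{e})^{-1}(B_v^{\top}x(t)-B_v^{\top}y(t))\|_\infty\le e^{-ct}\|\mathrm{diag}(B_v^{\top}\mathbf{e})^{-1}(B_v^{\top}x(0)-B_v^{\top}y(0))\|_\infty$.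
   Context: $\mathcal I_{\mathcal E}=\{v\in\mathbb{R}^n: v_i\ne v_j\text{ for every edge }\{i,j\}\in\mathcal E\}$. For $v\in\mathcal I_{\mathcal E}$, $B_v\in\mathbb{R}^{n\times m}$ is the incidence matrix of $G$ for an orientation of the edges chosen so that $B_v^{\top}v>0_m$; an incidence matrix has one column per edge, with entry $+1$ at the tail node, $-1$ at the head node, and $0$ elsewhere (so $B_v^{\top}x$ is the vector of edge differences $x_i-x_j$). $\mathbb{M}_m$ is the set of $m\times m$ Metzler matrices (nonnegative off-diagonal entries). Inequalities between vectors are entrywise; $\mathbf 1_n$ is the all-ones vector. *)

theory Defs
  imports "HOL-Analysis.Analysis"
begin

text \<open>Vertices are the elements of a finite type 'n (so n = CARD('n)).
  An undirected graph is a symmetric irreflexive edge relation E on 'n.\<close>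

definition undirected_graph :: "('n \<times> 'n) set \<Rightarrow> bool" where
  "undirected_graph E \<longleftrightarrow> sym E \<and> (\<forall>i. (i, i) \<notin> E)"

definition connected_graph :: "('n \<times> 'n) set \<Rightarrow> bool" where
  "connected_graph E \<longleftrightarrow> (\<forall>i j. (i, j) \<in> E\<^sup>*)"

definition I_E :: "('n \<times> 'n) set \<Rightarrow> (real ^ 'n) set" where
  "I_E E = {v. \<forall>(i, j) \<in> E. v $ i \<noteq> v $ j}"

text \<open>Oriented edges for v: each undirected edge {i,j} oriented from tail i to head j
  with v_i > v_j, so that B_v^T v > 0. These index the m columns of B_v.\<close>
definition oriented_edges :: "('n \<times> 'n) set \<Rightarrow> real ^ 'n \<Rightarrow> ('n \<times> 'n) set" where
  "oriented_edges E v = {(i, j). (i, j) \<in> E \<and> v $ i > v $ j}"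

text \<open>Incidence matrix entry (row k, column = oriented edge (i,j)).\<close>
definition incidence :: "'n \<Rightarrow> ('n \<times> 'n) \<Rightarrow> real" where
  "incidence k e = (if k = fst e then 1 else if k = snd e then -1 else 0)"

definition Bt :: "real ^ 'n \<Rightarrow> ('n \<times> 'n) \<Rightarrow> real" where
  "Bt x e = (\<Sum>k\<in>UNIV. incidence k e * x $ k)"

definition metzler_on :: "'e set \<Rightarrow> ('e \<Rightarrow> 'e \<Rightarrow> real) \<Rightarrow> bool" where
  "metzler_on M P \<longleftrightarrow> (\<forall>a\<in>M. \<forall>b\<in>M. a \<noteq> b \<longrightarrow> P a b \<ge> 0)"

definition trajectory :: "(real ^ 'n \<Rightarrow> real ^ 'n) \<Rightarrow> (real \<Rightarrow> real ^ 'n) \<Rightarrow> bool" where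
  "trajectory f x \<longleftrightarrow> (\<forall>t\<ge>0. (x has_vector_derivative f (x t)) (at t within {0..}))"

definition infnorm_on :: "'e set \<Rightarrow> ('e \<Rightarrow> real) \<Rightarrow> real" where
  "infnorm_on M w = Max (insert 0 ((\<lambda>a. \<bar>w a\<bar>) ` M))"

end

theory Submission
  imports Defs
begin


definition beta :: "('n::finite \<times> 'n) \<Rightarrow> real ^ 'n" where
  "beta e = (\<chi> k. incidence k e)"

lemma Bt_inner: "Bt u e = inner (beta e) u"
  by (simp add: Bt_def beta_def inner_vec_def)

lemma Bt_add: "Bt (x + y) e = Bt x e + Bt y e"
  by (simp add: Bt_inner inner_add_right)
lemma Bt_diff: "Bt (x - y) e = Bt x e - Bt y e"
  by (simp add: Bt_inner inner_diff_right)
lemma Bt_scale: "Bt (c *\<^sub>R x) e = c * Bt x e"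
  by (simp add: Bt_inner)
lemma bl_Bt: "bounded_linear (\<lambda>u. Bt u e)"
  unfolding Bt_inner by (rule bounded_linear_inner_right)

lemma Bt_edge: assumes "i \<noteq> j" shows "Bt u (i,j) = u$i - u$j"
proof -
  have "Bt u (i,j) = (\<Sum>k\<in>UNIV. (if k = i then u$i else 0) + (if k = j then - u$j else 0))"
    unfolding Bt_def by (rule sum.cong) (use assms in \<open>auto simp: incidence_def\<close>)
  also have "\<dots> = u$i - u$j" by (simp add: sum.distrib)
  finally show ?thesis .
qed

lemma Bt_abs_le: assumes "i \<noteq> j" shows "\<bar>Bt u (i,j)\<bar> \<le> 2 * norm u"
proof -
  have "\<bar>u$i\<bar> \<le> norm u" "\<bar>u$j\<bar> \<le> norm u" by (auto intro: component_le_norm_cart)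
  then show ?thesis using assms by (simp add: Bt_edge)
qed

lemma Bt_traj:
  assumes "trajectory f x" "t \<ge> 0"
  shows "((\<lambda>t. Bt (x t) e) has_real_derivative Bt (f (x t)) e) (at t within {0..})"
proof -
  have "(x has_vector_derivative f (x t)) (at t within {0..})" using assms by (simp add: trajectory_def)
  from bounded_linear.has_vector_derivative[OF bl_Bt this]
  show ?thesis by (simp add: has_real_derivative_iff_has_vector_derivative)
qed

lemma traj_cont: assumes "trajectory f x" shows "continuous_on {0..} x"
  using assms unfolding trajectory_def continuous_on_eq_continuous_within
  by (auto intro: has_vector_derivative_continuous)

lemma Bt_Jv: "Bt (A *v w) a = inner w (\<chi> k. \<Sum>i\<in>UNIV. incidence i a * A $ i $ k)"
  by (simp add: Bt_def inner_vec_def matrix_vector_mult_def sum_distrib_left sum_distrib_right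
      mult_ac) (rule sum.swap)

lemma metzler_sum:
  assumes "\<forall>k. (\<Sum>i\<in>UNIV. incidence i a * A $ i $ k) = (\<Sum>b\<in>M. P a b * incidence k b)"
    and "finite M"
  shows "Bt (A *v w) a = (\<Sum>b\<in>M. P a b * Bt w b)"
proof -
  have "Bt (A *v w) a = (\<Sum>k\<in>UNIV. w$k * (\<Sum>i\<in>UNIV. incidence i a * A $ i $ k))"
    by (simp add: Bt_Jv inner_vec_def)
  also have "\<dots> = (\<Sum>k\<in>UNIV. w$k * (\<Sum>b\<in>M. P a b * incidence k b))" using assms by simp
  also have "\<dots> = (\<Sum>b\<in>M. P a b * Bt w b)"
    by (simp add: Bt_def sum_distrib_left sum_distrib_right mult_ac) (rule sum.swap)
  finally show ?thesis .
qed

lemma metzler_lower: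
  fixes P :: "'e \<Rightarrow> 'e \<Rightarrow> real"
  assumes "finite M" "a \<in> M" "\<forall>b\<in>M. b \<noteq> a \<longrightarrow> P a b \<ge> 0"
    "\<forall>b\<in>M. z b \<ge> c * d b" "z a = c * d a"
  shows "(\<Sum>b\<in>M. P a b * z b) \<ge> c * (\<Sum>b\<in>M. P a b * d b)"
proof -
  have "(\<Sum>b\<in>M. P a b * z b) - c * (\<Sum>b\<in>M. P a b * d b) = (\<Sum>b\<in>M. P a b * (z b - c * d b))"
    by (simp add: sum_distrib_left sum_subtractf algebra_simps)
  also have "\<dots> \<ge> 0"
  proof (rule sum_nonneg)
    fix b assume b: "b \<in> M"
    show "0 \<le> P a b * (z b - c * d b)"
    proof (cases "b = a")
      case True then show ?thesis using assms by simp
    next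
      case False then show ?thesis using assms b by simp
    qed
  qed
  finally show ?thesis by simp
qed

lemma metzler_upper:
  fixes P :: "'e \<Rightarrow> 'e \<Rightarrow> real"
  assumes "finite M" "a \<in> M" "\<forall>b\<in>M. b \<noteq> a \<longrightarrow> P a b \<ge> 0"
    "\<forall>b\<in>M. z b \<le> c * d b" "z a = c * d a"
  shows "(\<Sum>b\<in>M. P a b * z b) \<le> c * (\<Sum>b\<in>M. P a b * d b)"
proof -
  have "(\<Sum>b\<in>M. P a b * (- z b)) \<ge> (-c) * (\<Sum>b\<in>M. P a b * d b)"
    by (rule metzler_lower) (use assms in auto)
  then show ?thesis by (simp add: sum_negf)
qed

lemma deriv_right_nonneg:
  assumes "(g has_real_derivative D) (at 0 within {0..})" "g 0 = 0" "\<And>t. t > 0 \<Longrightarrow> g t \<ge> 0"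
  shows "D \<ge> 0"
proof -
  have "((\<lambda>y. (g y - g 0) / (y - 0)) \<longlongrightarrow> D) (at_right 0)"
    using assms(1) by (simp add: has_field_derivative_iff at_within_Ici_at_right)
  moreover have "eventually (\<lambda>y. 0 \<le> (g y - g 0) / (y - 0)) (at_right (0::real))"
    using assms(2,3) by (auto simp: eventually_at_right_less intro!: eventually_mono[OF eventually_at_right_less])
  ultimately show ?thesis by (rule tendsto_lowerbound) simp
qed




lemma comparison:
  fixes q q' :: "'e \<Rightarrow> real \<Rightarrow> real"
  assumes fin: "finite M"
  and der: "\<And>a t. a\<in>M \<Longrightarrow> 0 \<le> t \<Longrightarrow> t \<le> T \<Longrightarrow> (q a has_real_derivative q' a t) (at t within {0..})"
  and init: "\<And>a. a\<in>M \<Longrightarrow> q a 0 > 0"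
  and bd: "\<And>a t. a\<in>M \<Longrightarrow> 0 \<le> t \<Longrightarrow> t \<le> T \<Longrightarrow> (\<forall>b\<in>M. q b t \<ge> 0) \<Longrightarrow> q a t = 0 \<Longrightarrow> q' a t > 0"
  and a: "a \<in> M" and t: "0 \<le> t" "t \<le> T"
  shows "q a t > 0"
proof (rule ccontr)
  assume neg: "\<not> q a t > 0"
  define S where "S = (\<Union>b\<in>M. {0..T} \<inter> q b -` {..0})"
  have cont: "continuous_on {0..T} (q b)" if "b \<in> M" for b
    unfolding continuous_on_eq_continuous_within
  proof
    fix s assume s: "s \<in> {0..T}"
    have "continuous (at s within {0..}) (q b)"
      using der[of b s] s that by (auto intro: DERIV_continuous)
    then show "continuous (at s within {0..T}) (q b)"
      by (rule continuous_within_subset) auto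
  qed
  have "closed S" unfolding S_def
    using fin cont by (intro closed_UN ballI continuous_closed_preimage) auto
  have "t \<in> S" using neg a t unfolding S_def by (auto simp: not_less)
  then have Sne: "S \<noteq> {}" by auto
  have bdd: "bdd_below S" unfolding S_def by (rule bdd_belowI[of _ 0]) auto
  define s where "s = Inf S"
  have sS: "s \<in> S" unfolding s_def using closed_contains_Inf[OF Sne bdd \<open>closed S\<close>] .
  then obtain a0 where a0: "a0 \<in> M" "q a0 s \<le> 0" and s0: "0 \<le> s" "s \<le> T" unfolding S_def by auto
  have "s \<noteq> 0" using a0 init by fastforce
  with s0 have spos: "s > 0" by simp
  have below: "q b y > 0" if "b \<in> M" "0 \<le> y" "y < s" for b y
  proof (rule ccontr)
    assume "\<not> q b y > 0"
    then have "y \<in> S" unfolding S_def using that s0 by (auto simp: not_less)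
    then have "s \<le> y" unfolding s_def by (rule cInf_lower[OF _ bdd])
    then show False using that by simp
  qed
  have atl: "at s within {0..s} = at_left s" using spos by (rule at_within_Icc_at_left)
  have evl: "eventually (\<lambda>y. 0 < y \<and> y < s) (at_left s)"
    using eventually_at_left_real[OF spos] by (auto elim: eventually_mono)
  have ge: "q b s \<ge> 0" if b: "b \<in> M" for b
  proof -
    have "continuous (at s within {0..}) (q b)"
      using der[of b s] s0 b by (auto intro: DERIV_continuous)
    then have "continuous (at s within {0..s}) (q b)"
      by (rule continuous_within_subset) auto
    then have "(q b \<longlongrightarrow> q b s) (at_left s)" using atl by (simp add: continuous_within)
    moreover have "eventually (\<lambda>y. 0 \<le> q b y) (at_left s)"
      using evl by (rule eventually_mono) (use below b in \<open>auto intro: less_imp_le\<close>)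
    ultimately show ?thesis by (rule tendsto_lowerbound) simp
  qed
  then have "q a0 s = 0" using a0 by (simp add: order_antisym)
  then have pos: "q' a0 s > 0" using bd[OF a0(1) s0] ge by blast
  have "(q a0 has_real_derivative q' a0 s) (at s within {0..s})"
    using der[OF a0(1) s0] by (rule DERIV_subset) auto
  then have "((\<lambda>y. (q a0 y - q a0 s) / (y - s)) \<longlongrightarrow> q' a0 s) (at_left s)"
    using atl by (simp add: has_field_derivative_iff)
  moreover have "eventually (\<lambda>y. (q a0 y - q a0 s) / (y - s) \<le> 0) (at_left s)"
    using evl
  proof (rule eventually_mono)
    fix y assume y: "0 < y \<and> y < s"
    then have "q a0 y > 0" using below a0 by auto
    then show "(q a0 y - q a0 s) / (y - s) \<le> 0" using y \<open>q a0 s = 0\<close>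
      by (simp add: divide_nonneg_neg less_imp_le)
  qed
  ultimately have "q' a0 s \<le> 0" by (rule tendsto_upperbound) simp
  with pos show False by simp
qed




lemma deriv_line:
  assumes deriv: "\<And>x. (f has_derivative (\<lambda>h. J x *v h)) (at x)"
  shows "((\<lambda>h. Bt (f (x0 + h *\<^sub>R w)) a) has_real_derivative Bt (J (x0 + h *\<^sub>R w) *v w) a) (at h within S)"
proof -
  have l: "((\<lambda>h. x0 + h *\<^sub>R w) has_derivative (\<lambda>k. k *\<^sub>R w)) (at h within S)"
    by (auto intro!: derivative_eq_intros)
  have "((\<lambda>h. f (x0 + h *\<^sub>R w)) has_derivative (\<lambda>k. J (x0 + h *\<^sub>R w) *v (k *\<^sub>R w))) (at h within S)"
    by (rule has_derivative_compose[OF l deriv])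
  from bounded_linear.has_derivative[OF bl_Bt this, of a]
  have "((\<lambda>h. Bt (f (x0 + h *\<^sub>R w)) a) has_derivative (\<lambda>k. Bt (J (x0 + h *\<^sub>R w) *v (k *\<^sub>R w)) a)) (at h within S)" .
  then show ?thesis unfolding has_field_derivative_def
    by (rule has_derivative_eq_rhs) (auto simp: matrix_vector_mult_scaleR Bt_scale mult.commute)
qed

lemma mvt_Bt:
  assumes deriv: "\<And>x. (f has_derivative (\<lambda>h. J x *v h)) (at x)"
  shows "\<exists>s. 0 \<le> s \<and> s \<le> 1 \<and> Bt (f q) a - Bt (f p) a = Bt (J (p + s *\<^sub>R (q - p)) *v (q - p)) a"
proof -
  have "\<exists>x\<in>{0<..<1::real}. Bt (f (p + 1 *\<^sub>R (q - p))) a - Bt (f (p + 0 *\<^sub>R (q - p))) a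
      = (\<lambda>k. Bt (J (p + x *\<^sub>R (q - p)) *v (q - p)) a * k) (1 - 0)"
  proof (rule mvt_simple)
    fix x :: real
    show "((\<lambda>h. Bt (f (p + h *\<^sub>R (q - p))) a) has_derivative (\<lambda>k. Bt (J (p + x *\<^sub>R (q - p)) *v (q - p)) a * k)) (at x within {0..1})"
      using deriv_line[OF deriv, of p "q - p" a x "{0..1}"] by (simp add: has_field_derivative_def)
  qed simp
  then obtain x where "x \<in> {0<..<1::real}" "Bt (f q) a - Bt (f p) a = Bt (J (p + x *\<^sub>R (q - p)) *v (q - p)) a" by auto
  then show ?thesis by (intro exI[of _ x]) auto
qed



lemma cont_mv: "continuous_on S (F :: 'a::topological_space \<Rightarrow> real^'n^'m) \<Longrightarrow> continuous_on S (\<lambda>p. F p *v d0)"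
  unfolding matrix_vector_mult_def
  by (intro continuous_intros continuous_on_vec_lambda) 
lemma cont_fst: "continuous_on A X \<Longrightarrow> continuous_on (A \<times> B) (\<lambda>p. X (fst p))"
  by (rule continuous_on_compose2[of A X]) (auto intro: continuous_intros)
lemma cont_seg: fixes X Y :: "real \<Rightarrow> real^'n" shows "continuous_on UNIV J \<Longrightarrow> continuous_on {0..t0} X \<Longrightarrow> continuous_on {0..t0} Y \<Longrightarrow>
  continuous_on ({0..t0}\<times>{0..1::real}) (\<lambda>p. (J (X (fst p) + snd p *\<^sub>R (Y (fst p) - X (fst p))) :: real^'n^'n) *v d0)"
  apply (rule cont_mv)
  apply (rule continuous_on_compose2[of UNIV J])
  apply assumption
  apply (intro continuous_intros cont_fst)
  apply auto
  done



lemma dirA: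
  fixes J :: "real^'n \<Rightarrow> real^'n^'n" and f :: "real^'n \<Rightarrow> real^'n" and M :: "('n::finite \<times> 'n) set"
  assumes deriv: "\<And>x. (f has_derivative (\<lambda>h. J x *v h)) (at x)"
    and C1: "continuous_on UNIV J"
    and edge: "\<And>a. a\<in>M \<Longrightarrow> fst a \<noteq> snd a"
    and dpos: "\<And>a. a\<in>M \<Longrightarrow> Bt d0 a > 0"
    and met: "\<forall>x. \<exists>P. metzler_on M P \<and> (\<forall>a\<in>M. \<forall>k. (\<Sum>i\<in>UNIV. incidence i a * J x $ i $ k) = (\<Sum>b\<in>M. P a b * incidence k b))"
    and X: "trajectory f X" and Y: "trajectory f Y"
    and init: "\<forall>a\<in>M. Bt (X 0) a \<le> Bt (Y 0) a"
    and t0: "0 \<le> t0" and a: "a \<in> M"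
  shows "Bt (X t0) a \<le> Bt (Y t0) a"
proof -
  have fin: "finite M" by simp
  define F where "F = (\<lambda>p::real\<times>real. J (X (fst p) + snd p *\<^sub>R (Y (fst p) - X (fst p))) *v d0)"
  have cX: "continuous_on {0..t0} X" using traj_cont[OF X] by (rule continuous_on_subset) auto
  have cY: "continuous_on {0..t0} Y" using traj_cont[OF Y] by (rule continuous_on_subset) auto
  have "compact (F ` ({0..t0}\<times>{0..1}))"
    by (rule compact_continuous_image) (use cont_seg[OF C1 cX cY] in \<open>auto simp: F_def intro: compact_Times\<close>)
  then obtain K0 where K0: "\<And>u. u \<in> F ` ({0..t0}\<times>{0..1}) \<Longrightarrow> norm u \<le> K0"
    using compact_imp_bounded bounded_iff by metis
  define K1 where "K1 = max K0 0"
  have K1: "K1 \<ge> 0" "K0 \<le> K1" by (auto simp: K1_def)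
  define m0 where "m0 = Min (Bt d0 ` M)"
  have "m0 \<in> Bt d0 ` M" unfolding m0_def using a by (intro Min_in) auto
  then have m0pos: "m0 > 0" using dpos by auto
  have m0le: "m0 \<le> Bt d0 b" if "b \<in> M" for b unfolding m0_def using that by (intro Min_le) auto
  define K where "K = 2*K1/m0 + 1"
  have Kbd: "K * Bt d0 b > 2*K1" if b: "b \<in> M" for b
  proof -
    have d: "Bt d0 b > 0" "m0 \<le> Bt d0 b" using dpos m0le b by auto
    have "2*K1 \<le> 2*K1 * (Bt d0 b / m0)" using d m0pos K1 by (simp add: mult_le_cancel_left1 le_divide_eq mult_left_mono)
    also have "\<dots> < K * Bt d0 b" unfolding K_def using d by (simp add: algebra_simps)
    finally show ?thesis .
  qed
  have main: "Bt (Y t0) a - Bt (X t0) a + \<epsilon> * exp(K*t0) * Bt d0 a > 0" if eps: "\<epsilon> > 0" for \<epsilon>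
  proof -
    define q where "q = (\<lambda>b t. Bt (Y t) b - Bt (X t) b + \<epsilon> * exp (K*t) * Bt d0 b)"
    define q' where "q' = (\<lambda>b t. Bt (f (Y t)) b - Bt (f (X t)) b + \<epsilon> * (K * exp (K*t)) * Bt d0 b)"
    have "q a t0 > 0"
    proof (rule comparison[where q = q and q' = q' and T=t0 and M=M and a=a and t=t0])
      fix b t assume b: "b \<in> M" and t: "0 \<le> t" "t \<le> t0"
      show "(q b has_real_derivative q' b t) (at t within {0..})"
        unfolding q_def q'_def
        by (intro derivative_eq_intros) (auto intro: Bt_traj[OF Y t(1)] Bt_traj[OF X t(1)])
    next
      fix b assume b: "b \<in> M"
      show "q b 0 > 0" using init b dpos[OF b] eps by (simp add: q_def add_nonneg_pos)
    next
      fix b t assume b: "b \<in> M" and t: "0 \<le> t" "t \<le> t0" and nn: "\<forall>c\<in>M. q c t \<ge> 0" and z: "q b t = 0"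
      obtain s where s: "0 \<le> s" "s \<le> 1"
        and sE: "Bt (f (Y t)) b - Bt (f (X t)) b = Bt (J (X t + s *\<^sub>R (Y t - X t)) *v (Y t - X t)) b"
        using mvt_Bt[OF deriv] by blast
      define \<xi> where "\<xi> = X t + s *\<^sub>R (Y t - X t)"
      obtain P where Pm: "metzler_on M P"
        and Pr: "\<forall>a\<in>M. \<forall>k. (\<Sum>i\<in>UNIV. incidence i a * J \<xi> $ i $ k) = (\<Sum>c\<in>M. P a c * incidence k c)"
        using met by blast
      have e1: "Bt (J \<xi> *v (Y t - X t)) b = (\<Sum>c\<in>M. P b c * Bt (Y t - X t) c)"
        by (rule metzler_sum) (use Pr b in auto)
      have e2: "Bt (J \<xi> *v d0) b = (\<Sum>c\<in>M. P b c * Bt d0 c)"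
        by (rule metzler_sum) (use Pr b in auto)
      define Ee where "Ee = \<epsilon> * exp (K*t)"
      have Ee: "Ee > 0" using eps by (simp add: Ee_def)
      have low: "(\<Sum>c\<in>M. P b c * Bt (Y t - X t) c) \<ge> (- Ee) * (\<Sum>c\<in>M. P b c * Bt d0 c)"
      proof (rule metzler_lower)
        show "\<forall>c\<in>M. c \<noteq> b \<longrightarrow> P b c \<ge> 0" using Pm b unfolding metzler_on_def by auto
        show "\<forall>c\<in>M. Bt (Y t - X t) c \<ge> - Ee * Bt d0 c"
          using nn by (auto simp: q_def Bt_diff Ee_def)
        show "Bt (Y t - X t) b = - Ee * Bt d0 b"
          using z by (auto simp: q_def Bt_diff Ee_def)
      qed (use b in auto)
      have "F (t,s) \<in> F ` ({0..t0}\<times>{0..1})" using s t by auto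
      then have "norm (J \<xi> *v d0) \<le> K0" using K0 by (auto simp: F_def \<xi>_def)
      then have "\<bar>Bt (J \<xi> *v d0) b\<bar> \<le> 2*K1"
        using Bt_abs_le[of "fst b" "snd b" "J \<xi> *v d0"] edge[OF b] K1 by simp
      then have l2: "- Ee * Bt (J \<xi> *v d0) b \<ge> - Ee * (2*K1)" using Ee by simp
      have l3: "Ee * (K * Bt d0 b - 2*K1) > 0" using Ee Kbd[OF b] by simp
      have "q' b t = Bt (J \<xi> *v (Y t - X t)) b + Ee * K * Bt d0 b"
        unfolding q'_def Ee_def using sE \<xi>_def by simp
      then show "q' b t > 0" using e1 e2 low l2 l3 by (simp add: algebra_simps)
    qed (use a t0 in auto)
    then show ?thesis by (simp add: q_def)
  qed
  have "((\<lambda>\<epsilon>. Bt (Y t0) a - Bt (X t0) a + \<epsilon> * exp(K*t0) * Bt d0 a) \<longlongrightarrow>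
        Bt (Y t0) a - Bt (X t0) a + 0 * exp(K*t0) * Bt d0 a) (at_right 0)"
    by (intro tendsto_intros)
  moreover have "eventually (\<lambda>\<epsilon>. 0 \<le> Bt (Y t0) a - Bt (X t0) a + \<epsilon> * exp(K*t0) * Bt d0 a) (at_right (0::real))"
    using eventually_at_right_less by (rule eventually_mono) (use main in \<open>auto intro: less_imp_le\<close>)
  ultimately have "0 \<le> Bt (Y t0) a - Bt (X t0) a + 0 * exp(K*t0) * Bt d0 a"
    by (rule tendsto_lowerbound) simp
  then show ?thesis by simp
qed




lemma dirC:
  fixes J :: "real^'n \<Rightarrow> real^'n^'n" and f :: "real^'n \<Rightarrow> real^'n" and M :: "('n::finite \<times> 'n) set"
  assumes deriv: "\<And>x. (f has_derivative (\<lambda>h. J x *v h)) (at x)"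
    and dpos: "\<And>a. a\<in>M \<Longrightarrow> Bt e a > 0"
    and met: "\<forall>x. \<exists>P. metzler_on M P \<and> (\<forall>a\<in>M. \<forall>k. (\<Sum>i\<in>UNIV. incidence i a * J x $ i $ k) = (\<Sum>b\<in>M. P a b * incidence k b))"
    and iii: "\<forall>x. \<forall>a\<in>M. Bt (J x *v e) a \<le> - c * Bt e a"
    and X: "trajectory f X" and Y: "trajectory f Y"
    and t0: "0 \<le> t0"
  shows "infnorm_on M (\<lambda>a. (Bt (X t0) a - Bt (Y t0) a) / Bt e a)
     \<le> exp (- c * t0) * infnorm_on M (\<lambda>a. (Bt (X 0) a - Bt (Y 0) a) / Bt e a)"
proof -
  have fin: "finite M" by simp
  define z where "z = (\<lambda>b t. Bt (X t) b - Bt (Y t) b)"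
  define M0 where "M0 = infnorm_on M (\<lambda>a. (Bt (X 0) a - Bt (Y 0) a) / Bt e a)"
  have M0: "M0 \<ge> 0" unfolding M0_def infnorm_on_def by (rule Max_ge) auto
  have z0: "\<bar>z b 0\<bar> \<le> M0 * Bt e b" if b: "b \<in> M" for b
  proof -
    have "\<bar>z b 0 / Bt e b\<bar> \<le> M0" unfolding M0_def infnorm_on_def z_def by (rule Max_ge) (use b in auto)
    then show ?thesis using dpos[OF b] by (simp add: pos_divide_le_eq)
  qed
  have key: "\<bar>z a t0\<bar> < (M0 + \<epsilon>) * exp ((\<epsilon> - c) * t0) * Bt e a" if eps: "\<epsilon> > 0" and a: "a \<in> M" for \<epsilon> a
  proof -
    define R where "R = (\<lambda>t. (M0 + \<epsilon>) * exp ((\<epsilon> - c) * t))"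
    have Rpos: "R t > 0" for t using M0 eps by (simp add: R_def)
    define \<sigma> where "\<sigma> = (\<lambda>s::bool. if s then 1 else - 1 :: real)"
    define q where "q = (\<lambda>p t. R t * Bt e (fst p) - \<sigma> (snd p) * z (fst p) t)"
    define q' where "q' = (\<lambda>p t. (M0 + \<epsilon>) * (exp ((\<epsilon> - c) * t) * (\<epsilon> - c)) * Bt e (fst p)
        - \<sigma> (snd p) * (Bt (f (X t)) (fst p) - Bt (f (Y t)) (fst p)))"
    have R': "q' p t = R t * (\<epsilon> - c) * Bt e (fst p) - \<sigma> (snd p) * (Bt (f (X t)) (fst p) - Bt (f (Y t)) (fst p))" for p t
      by (simp add: q'_def R_def)
    have cmp: "q p t0 > 0" if p: "p \<in> M \<times> UNIV" for p
    proof (rule comparison[where q = q and q' = q' and T=t0 and M="M \<times> UNIV" and a=p and t=t0])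
      fix p t assume p: "p \<in> M \<times> (UNIV::bool set)" and t: "0 \<le> t" "t \<le> t0"
      show "(q p has_real_derivative q' p t) (at t within {0..})"
        unfolding q_def q'_def z_def R_def
        by (intro derivative_eq_intros) (auto intro: Bt_traj[OF Y t(1)] Bt_traj[OF X t(1)])
    next
      fix p assume p: "p \<in> M \<times> (UNIV::bool set)"
      have "\<sigma> (snd p) * z (fst p) 0 \<le> M0 * Bt e (fst p)"
        using z0[of "fst p"] p by (auto simp: \<sigma>_def)
      moreover have "\<epsilon> * Bt e (fst p) > 0" using eps dpos p by auto
      ultimately show "q p 0 > 0" by (simp add: q_def R_def algebra_simps)
    next
      fix p t assume p: "p \<in> M \<times> (UNIV::bool set)" and t: "0 \<le> t" "t \<le> t0"
        and nn: "\<forall>r\<in>M \<times> UNIV. q r t \<ge> 0" and zz: "q p t = 0"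
      obtain b s0 where bs: "p = (b, s0)" by (cases p)
      have b: "b \<in> M" using p bs by auto
      have up: "z c t \<le> R t * Bt e c" if "c \<in> M" for c using nn[rule_format, of "(c,True)"] that by (simp add: q_def \<sigma>_def)
      have lo: "z c t \<ge> - R t * Bt e c" if "c \<in> M" for c using nn[rule_format, of "(c,False)"] that by (simp add: q_def \<sigma>_def)
      obtain s where sE: "Bt (f (X t)) b - Bt (f (Y t)) b = Bt (J (Y t + s *\<^sub>R (X t - Y t)) *v (X t - Y t)) b"
        using mvt_Bt[OF deriv] by blast
      define \<xi> where "\<xi> = Y t + s *\<^sub>R (X t - Y t)"
      obtain P where Pm: "metzler_on M P"
        and Pr: "\<forall>a\<in>M. \<forall>k. (\<Sum>i\<in>UNIV. incidence i a * J \<xi> $ i $ k) = (\<Sum>c\<in>M. P a c * incidence k c)"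
        using met by blast
      have e1: "Bt (J \<xi> *v (X t - Y t)) b = (\<Sum>c\<in>M. P b c * z c t)"
        by (subst metzler_sum[where M=M and P=P]) (use Pr b in \<open>auto simp: z_def Bt_diff\<close>)
      have e2: "Bt (J \<xi> *v e) b = (\<Sum>c\<in>M. P b c * Bt e c)"
        by (rule metzler_sum) (use Pr b in auto)
      have Pnn: "\<forall>c\<in>M. c \<noteq> b \<longrightarrow> P b c \<ge> 0" using Pm b unfolding metzler_on_def by auto
      have iiib: "R t * Bt (J \<xi> *v e) b \<le> R t * (- c * Bt e b)"
        using iii b Rpos[of t] by (intro mult_left_mono) auto
      have epos: "\<epsilon> * R t * Bt e b > 0" using eps Rpos[of t] dpos[OF b] by simp
      show "q' p t > 0"
      proof (cases s0)
        case True
        then have zb: "z b t = R t * Bt e b" using zz bs by (simp add: q_def \<sigma>_def)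
        have "(\<Sum>c\<in>M. P b c * z c t) \<le> R t * (\<Sum>c\<in>M. P b c * Bt e c)"
          by (rule metzler_upper) (use Pnn up zb b in auto)
        then have w: "Bt (J \<xi> *v (X t - Y t)) b \<le> R t * Bt (J \<xi> *v e) b" using e1 e2 by simp
        have q'e: "q' p t = R t * (\<epsilon> - c) * Bt e b - Bt (J \<xi> *v (X t - Y t)) b"
          using R'[of p t] bs True sE by (simp add: \<sigma>_def \<xi>_def)
        have id: "R t * (\<epsilon> - c) * Bt e b = \<epsilon> * R t * Bt e b + R t * (- c * Bt e b)" by (simp add: algebra_simps)
        show ?thesis using q'e id w iiib epos by linarith
      next
        case False
        then have zb: "z b t = - R t * Bt e b" using zz bs by (simp add: q_def \<sigma>_def)
        have "(\<Sum>c\<in>M. P b c * z c t) \<ge> - R t * (\<Sum>c\<in>M. P b c * Bt e c)"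
          by (rule metzler_lower) (use Pnn lo zb b in auto)
        then have w: "Bt (J \<xi> *v (X t - Y t)) b \<ge> - (R t * Bt (J \<xi> *v e) b)" using e1 e2 by simp
        have q'e: "q' p t = R t * (\<epsilon> - c) * Bt e b + Bt (J \<xi> *v (X t - Y t)) b"
          using R'[of p t] bs False sE by (simp add: \<sigma>_def \<xi>_def)
        have id: "R t * (\<epsilon> - c) * Bt e b = \<epsilon> * R t * Bt e b + R t * (- c * Bt e b)" by (simp add: algebra_simps)
        show ?thesis using q'e id w iiib epos by linarith
      qed
    qed (use p t0 in auto)
    have "q (a, True) t0 > 0" "q (a, False) t0 > 0" using cmp a by auto
    then show ?thesis by (auto simp: q_def \<sigma>_def R_def)
  qed
  have kk: "\<bar>z a t0\<bar> \<le> M0 * exp (- c * t0) * Bt e a" if a: "a \<in> M" for a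
  proof -
    have "((\<lambda>\<epsilon>. (M0 + \<epsilon>) * exp ((\<epsilon> - c) * t0) * Bt e a) \<longlongrightarrow> (M0 + 0) * exp ((0 - c) * t0) * Bt e a) (at_right 0)"
      by (intro tendsto_intros)
    moreover have "eventually (\<lambda>\<epsilon>. \<bar>z a t0\<bar> \<le> (M0 + \<epsilon>) * exp ((\<epsilon> - c) * t0) * Bt e a) (at_right (0::real))"
      using eventually_at_right_less by (rule eventually_mono) (use key[OF _ a] in \<open>auto intro: less_imp_le\<close>)
    ultimately have "\<bar>z a t0\<bar> \<le> (M0 + 0) * exp ((0 - c) * t0) * Bt e a"
      by (rule tendsto_lowerbound) simp
    then show ?thesis by simp
  qed
  have bnd: "exp (- c * t0) * M0 \<ge> 0" using M0 by simp
  have "infnorm_on M (\<lambda>a. (Bt (X t0) a - Bt (Y t0) a) / Bt e a) \<le> exp (- c * t0) * M0"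
    unfolding infnorm_on_def
  proof (rule Max.boundedI)
    fix x assume "x \<in> insert 0 ((\<lambda>a. \<bar>(Bt (X t0) a - Bt (Y t0) a) / Bt e a\<bar>) ` M)"
    then show "x \<le> exp (- c * t0) * M0"
    proof
      assume "x = 0" then show ?thesis using bnd by simp
    next
      assume "x \<in> (\<lambda>a. \<bar>(Bt (X t0) a - Bt (Y t0) a) / Bt e a\<bar>) ` M"
      then obtain a where a: "a \<in> M" and x: "x = \<bar>z a t0 / Bt e a\<bar>" by (auto simp: z_def)
      show ?thesis using kk[OF a] dpos[OF a] by (simp add: x pos_divide_le_eq mult_ac)
    qed
  qed auto
  then show ?thesis by (simp add: M0_def)
qed





lemma cone_hull_sum:
  fixes g :: "'i \<Rightarrow> 'a::real_vector"
  assumes fin: "finite I"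
  shows "convex_cone hull (g ` I) \<subseteq> {y. \<exists>l. (\<forall>i\<in>I. l i \<ge> 0) \<and> y = (\<Sum>i\<in>I. l i *\<^sub>R g i)}"
    (is "_ \<subseteq> ?S")
proof (rule hull_minimal)
  show "g ` I \<subseteq> ?S"
  proof
    fix y assume "y \<in> g ` I"
    then obtain i where i: "i \<in> I" "y = g i" by auto
    have "(\<Sum>j\<in>I. (if j = i then 1 else 0) *\<^sub>R g j) = g i"
      using i fin by (simp add: if_distrib[of "\<lambda>c. c *\<^sub>R _"] sum.delta cong: if_cong)
    then show "y \<in> ?S" using i by (intro CollectI exI[of _ "\<lambda>j. if j = i then 1 else 0"]) auto
  qed
  have z: "0 \<in> ?S" by (intro CollectI exI[of _ "\<lambda>j. 0"]) auto
  have cv: "convex ?S" unfolding convex_def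
  proof (intro ballI allI impI)
    fix x y :: 'a and u v :: real
    assume x: "x \<in> ?S" and y: "y \<in> ?S" and uv: "0 \<le> u" "0 \<le> v" "u + v = 1"
    obtain l1 where l1: "\<forall>i\<in>I. l1 i \<ge> 0" "x = (\<Sum>i\<in>I. l1 i *\<^sub>R g i)" using x by auto
    obtain l2 where l2: "\<forall>i\<in>I. l2 i \<ge> 0" "y = (\<Sum>i\<in>I. l2 i *\<^sub>R g i)" using y by auto
    have "u *\<^sub>R x + v *\<^sub>R y = (\<Sum>i\<in>I. (u * l1 i + v * l2 i) *\<^sub>R g i)"
      by (simp add: l1 l2 scaleR_sum_right sum.distrib scaleR_add_left)
    then show "u *\<^sub>R x + v *\<^sub>R y \<in> ?S" using l1 l2 uv
      by (intro CollectI exI[of _ "\<lambda>i. u * l1 i + v * l2 i"]) auto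
  qed
  have cn: "conic ?S" unfolding conic_def
  proof (intro allI impI)
    fix x :: 'a and c :: real assume x: "x \<in> ?S" and c: "0 \<le> c"
    obtain l1 where l1: "\<forall>i\<in>I. l1 i \<ge> 0" "x = (\<Sum>i\<in>I. l1 i *\<^sub>R g i)" using x by auto
    have "c *\<^sub>R x = (\<Sum>i\<in>I. (c * l1 i) *\<^sub>R g i)" by (simp add: l1 scaleR_sum_right)
    then show "c *\<^sub>R x \<in> ?S" using l1 c by (intro CollectI exI[of _ "\<lambda>i. c * l1 i"]) auto
  qed
  show "convex_cone ?S" unfolding convex_cone_def using z cv cn by auto
qed

lemma farkas_row:
  fixes r :: "real^'n::finite" and M :: "('n \<times> 'n) set"
  assumes a: "a \<in> M"
    and cond: "\<And>u. (\<forall>b\<in>M. Bt u b \<ge> 0) \<Longrightarrow> Bt u a = 0 \<Longrightarrow> inner u r \<ge> 0"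
  shows "\<exists>p. (\<forall>b\<in>M. b \<noteq> a \<longrightarrow> p b \<ge> 0) \<and> r = (\<Sum>b\<in>M. p b *\<^sub>R beta b)"
proof -
  have finM: "finite M" by simp
  define I where "I = insert (a, False) ((\<lambda>b. (b, True)) ` M)"
  define g :: "('n \<times> 'n) \<times> bool \<Rightarrow> real^'n" where "g = (\<lambda>(b, s). if s then beta b else - beta b)"
  define K where "K = convex_cone hull (g ` I)"
  have finI: "finite I" unfolding I_def by simp
  have "closed K" unfolding K_def by (rule closed_convex_cone_hull) (simp add: finI)
  have "convex K" unfolding K_def by (rule convex_convex_cone_hull)
  have gK: "x \<in> K" if "x \<in> g ` I" for x unfolding K_def using that by (rule hull_inc)
  have rK: "r \<in> K"
  proof (rule ccontr)
    assume "r \<notin> K"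
    from separating_hyperplane_closed_point[OF \<open>convex K\<close> \<open>closed K\<close> this]
    obtain u bb where ub: "inner u r < bb" "\<forall>x\<in>K. inner u x > bb" by blast
    have "0 \<in> K" unfolding K_def by (rule convex_cone_hull_contains_0)
    then have bb: "bb < 0" using ub by force
    have gen: "inner u x \<ge> 0" if x: "x \<in> g ` I" for x
    proof (rule ccontr)
      assume neg: "\<not> inner u x \<ge> 0"
      then have "bb / inner u x > 0" using bb by (simp add: divide_neg_neg)
      then have "(bb / inner u x) *\<^sub>R x \<in> K" unfolding K_def
        using gK[OF x] by (intro convex_cone_hull_mul) (auto simp: K_def)
      moreover have "inner u ((bb / inner u x) *\<^sub>R x) = bb" using neg by simp
      ultimately show False using ub by force
    qed
    have "\<forall>b\<in>M. Bt u b \<ge> 0"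
    proof
      fix b assume "b \<in> M"
      then have "beta b \<in> g ` I" unfolding I_def g_def by force
      then show "Bt u b \<ge> 0" using gen by (metis Bt_inner inner_commute)
    qed
    moreover have "- beta a \<in> g ` I" unfolding I_def g_def by force
    then have "Bt u a \<le> 0" using gen[of "- beta a"] by (metis Bt_inner inner_commute inner_minus_right neg_0_le_iff_le)
    ultimately have "Bt u a = 0" using a by (simp add: order_antisym)
    then have "inner u r \<ge> 0" using cond \<open>\<forall>b\<in>M. Bt u b \<ge> 0\<close> by blast
    then show False using ub bb by simp
  qed
  then obtain l where l: "\<forall>i\<in>I. l i \<ge> 0" "r = (\<Sum>i\<in>I. l i *\<^sub>R g i)"
    using cone_hull_sum[OF finI, of g] unfolding K_def by blast
  define p where "p = (\<lambda>b. l (b, True) - (if b = a then l (a, False) else 0))"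
  have notin: "(a, False) \<notin> (\<lambda>b. (b, True)) ` M" by auto
  have inj: "inj_on (\<lambda>b. (b, True)) M" by (auto simp: inj_on_def)
  have "(\<Sum>i\<in>I. l i *\<^sub>R g i) = l (a, False) *\<^sub>R (- beta a) + (\<Sum>b\<in>M. l (b, True) *\<^sub>R beta b)"
    unfolding I_def using notin finM by (simp add: sum.reindex[OF inj] g_def)
  also have "\<dots> = (\<Sum>b\<in>M. p b *\<^sub>R beta b)"
  proof -
    have "(\<Sum>b\<in>M. p b *\<^sub>R beta b) = (\<Sum>b\<in>M. l (b, True) *\<^sub>R beta b) - (\<Sum>b\<in>M. (if b = a then l (a, False) else 0) *\<^sub>R beta b)"
      by (simp add: p_def scaleR_left_diff_distrib sum_subtractf)
    also have "(\<Sum>b\<in>M. (if b = a then l (a, False) else 0) *\<^sub>R beta b) = l (a, False) *\<^sub>R beta a"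
      using a finM by (simp add: if_distrib[of "\<lambda>c. c *\<^sub>R _"] sum.delta cong: if_cong)
    finally show ?thesis by simp
  qed
  finally have "r = (\<Sum>b\<in>M. p b *\<^sub>R beta b)" using l by simp
  moreover have "\<forall>b\<in>M. b \<noteq> a \<longrightarrow> p b \<ge> 0" using l(1) unfolding p_def I_def by auto
  ultimately show ?thesis by blast
qed




lemma dirB:
  fixes J :: "real^'n \<Rightarrow> real^'n^'n" and f :: "real^'n \<Rightarrow> real^'n" and M :: "('n::finite \<times> 'n) set"
  assumes deriv: "\<And>x. (f has_derivative (\<lambda>h. J x *v h)) (at x)"
    and global: "\<And>x0. \<exists>x. trajectory f x \<and> x 0 = x0"
    and ii: "\<forall>x y. trajectory f x \<longrightarrow> trajectory f y \<longrightarrow>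
        (\<forall>a\<in>M. Bt (x 0) a \<le> Bt (y 0) a) \<longrightarrow>
        (\<forall>t\<ge>0. \<forall>a\<in>M. Bt (x t) a \<le> Bt (y t) a)"
  shows "\<forall>x. \<exists>P. metzler_on M P \<and> (\<forall>a\<in>M. \<forall>k. (\<Sum>i\<in>UNIV. incidence i a * J x $ i $ k) = (\<Sum>b\<in>M. P a b * incidence k b))"
proof
  fix x0
  have cond: "Bt (J x0 *v w) a \<ge> 0" if a: "a \<in> M" and w: "\<forall>b\<in>M. Bt w b \<ge> 0" and wa: "Bt w a = 0" for a w
  proof -
    have step: "Bt (f (x0 + h *\<^sub>R w)) a - Bt (f x0) a \<ge> 0" if h: "h > 0" for h
    proof -
      obtain X where X: "trajectory f X" "X 0 = x0" using global by blast
      obtain Y where Y: "trajectory f Y" "Y 0 = x0 + h *\<^sub>R w" using global by blast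
      have init: "\<forall>b\<in>M. Bt (X 0) b \<le> Bt (Y 0) b" using w h X Y by (simp add: Bt_add Bt_scale)
      have ii': "\<forall>t\<ge>0. \<forall>a\<in>M. Bt (X t) a \<le> Bt (Y t) a"
        using mp[OF mp[OF mp[OF spec[OF spec[OF ii, of X], of Y] X(1)] Y(1)] init] .
      have le: "Bt (X t) a \<le> Bt (Y t) a" if "t \<ge> 0" for t using ii' that a by blast
      have "((\<lambda>t. Bt (Y t) a - Bt (X t) a) has_real_derivative Bt (f (Y 0)) a - Bt (f (X 0)) a) (at 0 within {0..})"
        by (intro DERIV_diff Bt_traj[OF Y(1)] Bt_traj[OF X(1)]) auto
      from deriv_right_nonneg[OF this] show ?thesis
        using le X Y wa by (simp add: Bt_add Bt_scale less_imp_le)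
    qed
    have "((\<lambda>h. Bt (f (x0 + h *\<^sub>R w)) a - Bt (f x0) a) has_real_derivative Bt (J (x0 + 0 *\<^sub>R w) *v w) a - 0) (at 0 within {0..})"
      by (intro DERIV_diff deriv_line[OF deriv] DERIV_const)
    from deriv_right_nonneg[OF this] show ?thesis using step by simp
  qed
  have rows: "\<forall>a\<in>M. \<exists>p. (\<forall>b\<in>M. b \<noteq> a \<longrightarrow> p b \<ge> 0) \<and> (\<forall>k. (\<Sum>i\<in>UNIV. incidence i a * J x0 $ i $ k) = (\<Sum>b\<in>M. p b * incidence k b))"
  proof
    fix a assume a: "a \<in> M"
    define r :: "real^'n" where "r = (\<chi> k. \<Sum>i\<in>UNIV. incidence i a * J x0 $ i $ k)"
    have "\<exists>p. (\<forall>b\<in>M. b \<noteq> a \<longrightarrow> p b \<ge> 0) \<and> r = (\<Sum>b\<in>M. p b *\<^sub>R beta b)"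
    proof (rule farkas_row[OF a])
      fix u :: "real^'n" assume "\<forall>b\<in>M. Bt u b \<ge> 0" "Bt u a = 0"
      then have "Bt (J x0 *v u) a \<ge> 0" using cond a by blast
      then show "inner u r \<ge> 0" by (simp add: Bt_Jv r_def)
    qed
    then obtain p where p: "\<forall>b\<in>M. b \<noteq> a \<longrightarrow> p b \<ge> 0" "r = (\<Sum>b\<in>M. p b *\<^sub>R beta b)" by blast
    have "\<forall>k. (\<Sum>i\<in>UNIV. incidence i a * J x0 $ i $ k) = (\<Sum>b\<in>M. p b * incidence k b)"
    proof
      fix k
      have "r $ k = (\<Sum>b\<in>M. p b * incidence k b)" using p(2) by (simp add: beta_def)
      then show "(\<Sum>i\<in>UNIV. incidence i a * J x0 $ i $ k) = (\<Sum>b\<in>M. p b * incidence k b)" by (simp add: r_def)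
    qed
    then show "\<exists>p. (\<forall>b\<in>M. b \<noteq> a \<longrightarrow> p b \<ge> 0) \<and> (\<forall>k. (\<Sum>i\<in>UNIV. incidence i a * J x0 $ i $ k) = (\<Sum>b\<in>M. p b * incidence k b))"
      using p(1) by blast
  qed
  obtain P where P: "\<forall>a\<in>M. (\<forall>b\<in>M. b \<noteq> a \<longrightarrow> P a b \<ge> 0) \<and> (\<forall>k. (\<Sum>i\<in>UNIV. incidence i a * J x0 $ i $ k) = (\<Sum>b\<in>M. P a b * incidence k b))"
    using bchoice[OF rows] by (elim exE) (rule that)
  show "\<exists>P. metzler_on M P \<and> (\<forall>a\<in>M. \<forall>k. (\<Sum>i\<in>UNIV. incidence i a * J x0 $ i $ k) = (\<Sum>b\<in>M. P a b * incidence k b))"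
  proof (intro exI conjI)
    show "metzler_on M P" unfolding metzler_on_def
    proof (intro ballI impI)
      fix a b assume ab: "a \<in> M" "b \<in> M" "a \<noteq> b"
      have "\<forall>b\<in>M. b \<noteq> a \<longrightarrow> P a b \<ge> 0" using bspec[OF P ab(1)] by (rule conjunct1)
      then show "P a b \<ge> 0" using ab by simp
    qed
    show "\<forall>a\<in>M. \<forall>k. (\<Sum>i\<in>UNIV. incidence i a * J x0 $ i $ k) = (\<Sum>b\<in>M. P a b * incidence k b)"
    proof
      fix a assume a: "a \<in> M"
      show "\<forall>k. (\<Sum>i\<in>UNIV. incidence i a * J x0 $ i $ k) = (\<Sum>b\<in>M. P a b * incidence k b)"
        using bspec[OF P a] by (rule conjunct2)
    qed
  qed
qed



lemma dirD:
  fixes J :: "real^'n \<Rightarrow> real^'n^'n" and f :: "real^'n \<Rightarrow> real^'n" and M :: "('n::finite \<times> 'n) set"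
  assumes deriv: "\<And>x. (f has_derivative (\<lambda>h. J x *v h)) (at x)"
    and global: "\<And>x0. \<exists>x. trajectory f x \<and> x 0 = x0"
    and dpos: "\<And>a. a\<in>M \<Longrightarrow> Bt e a > 0"
    and iv: "\<forall>x y. trajectory f x \<longrightarrow> trajectory f y \<longrightarrow>
            (\<forall>t\<ge>0. infnorm_on M (\<lambda>a. (Bt (x t) a - Bt (y t) a) / Bt e a)
                   \<le> exp (- c * t) * infnorm_on M (\<lambda>a. (Bt (x 0) a - Bt (y 0) a) / Bt e a))"
    and a: "a \<in> M"
  shows "Bt (J x0 *v e) a \<le> - c * Bt e a"
proof -
  have finM: "finite M" by simp
  have step: "Bt (f x0) a - Bt (f (x0 + h *\<^sub>R (- e))) a \<le> - c * h * Bt e a" if h: "h > 0" for h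
  proof -
    obtain X where X: "trajectory f X" "X 0 = x0" using global by blast
    obtain Y where Y: "trajectory f Y" "Y 0 = x0 + h *\<^sub>R (- e)" using global by blast
    have d0: "Bt (X 0) b - Bt (Y 0) b = h * Bt e b" for b using X Y by (simp add: Bt_inner inner_diff_right)
    have eq: "\<bar>(Bt (X 0) b - Bt (Y 0) b) / Bt e b\<bar> = h" if b: "b \<in> M" for b
    proof -
      have "Bt e b > 0" using dpos[OF b] .
      then show ?thesis using h by (simp add: d0)
    qed
    have img: "(\<lambda>b. \<bar>(Bt (X 0) b - Bt (Y 0) b) / Bt e b\<bar>) ` M = {h}"
    proof
      show "(\<lambda>b. \<bar>(Bt (X 0) b - Bt (Y 0) b) / Bt e b\<bar>) ` M \<subseteq> {h}" using eq by auto
      show "{h} \<subseteq> (\<lambda>b. \<bar>(Bt (X 0) b - Bt (Y 0) b) / Bt e b\<bar>) ` M"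
        using eq[OF a] a by (auto intro: image_eqI[where x=a])
    qed
    have n0: "infnorm_on M (\<lambda>b. (Bt (X 0) b - Bt (Y 0) b) / Bt e b) = h"
      unfolding infnorm_on_def img using h by simp
    have le: "Bt (X t) a - Bt (Y t) a \<le> h * exp (- c * t) * Bt e a" if t: "t \<ge> 0" for t
    proof -
      have "\<bar>(Bt (X t) a - Bt (Y t) a) / Bt e a\<bar> \<le> infnorm_on M (\<lambda>b. (Bt (X t) b - Bt (Y t) b) / Bt e b)"
        unfolding infnorm_on_def by (rule Max_ge) (use a in auto)
      also have "\<dots> \<le> exp (- c * t) * h" using iv[rule_format, OF X(1) Y(1) t] n0 by simp
      finally have "(Bt (X t) a - Bt (Y t) a) / Bt e a \<le> exp (- c * t) * h" by (rule abs_le_D1[OF order_trans, OF order_refl])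
      then show ?thesis using dpos[OF a] by (simp add: pos_divide_le_eq mult_ac)
    qed
    have "((\<lambda>t. h * exp (- c * t) * Bt e a - (Bt (X t) a - Bt (Y t) a)) has_real_derivative
         - c * h * Bt e a - (Bt (f (X 0)) a - Bt (f (Y 0)) a)) (at 0 within {0..})"
      by (intro derivative_eq_intros) (auto intro: Bt_traj[OF Y(1)] Bt_traj[OF X(1)])
    from deriv_right_nonneg[OF this] have "0 \<le> - c * h * Bt e a - (Bt (f (X 0)) a - Bt (f (Y 0)) a)"
      using le d0[of a] by (simp add: less_imp_le)
    then show ?thesis using X Y by (simp add: mult_ac)
  qed
  have "((\<lambda>h. - c * h * Bt e a - (Bt (f x0) a - Bt (f (x0 + h *\<^sub>R (- e))) a)) has_real_derivative
      - c * Bt e a + Bt (J x0 *v (- e)) a) (at 0 within {0..})"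
  proof -
    have "((\<lambda>h. Bt (f (x0 + h *\<^sub>R (- e))) a) has_real_derivative Bt (J (x0 + 0 *\<^sub>R (- e)) *v (- e)) a) (at 0 within {0..})"
      by (rule deriv_line[OF deriv])
    then have d2: "((\<lambda>h. Bt (f x0) a - Bt (f (x0 + h *\<^sub>R (- e))) a) has_real_derivative 0 - Bt (J (x0 + 0 *\<^sub>R (- e)) *v (- e)) a) (at 0 within {0..})"
      by (rule DERIV_diff[OF DERIV_const])
    have d1: "((\<lambda>h. - c * h * Bt e a) has_real_derivative - c * Bt e a) (at 0 within {0..})"
      by (intro derivative_eq_intros) auto
    from DERIV_diff[OF d1 d2] show ?thesis by simp
  qed
  from deriv_right_nonneg[OF this] have "0 \<le> - c * Bt e a + Bt (J x0 *v (- e)) a"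
    using step by (simp add: less_imp_le)
  moreover have "Bt (J x0 *v (- e)) a = - Bt (J x0 *v e) a"
  proof -
    have "J x0 *v (- e) = - (J x0 *v e)"
      by (metis diff_0 matrix_vector_mult_0_right matrix_vector_mult_diff_distrib)
    then show ?thesis by (simp add: Bt_inner)
  qed
  ultimately show ?thesis by simp
qed



theorem theorem4:
  fixes E :: "('n::finite \<times> 'n) set"
    and f :: "real ^ 'n \<Rightarrow> real ^ 'n"
    and J :: "real ^ 'n \<Rightarrow> real ^ 'n ^ 'n"
    and v :: "real ^ 'n"
  assumes graph: "undirected_graph E" and conn: "connected_graph E"
    and deriv: "\<And>x. (f has_derivative (\<lambda>h. J x *v h)) (at x)"
    and C1: "continuous_on UNIV J"
    and global: "\<And>x0. \<exists>x. trajectory f x \<and> x 0 = x0"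
    and shift: "\<And>x c. f (x + c *\<^sub>R (\<chi> i. 1)) = f x"
    and v: "v \<in> I_E E"
  shows
   "((\<forall>x. \<exists>P. metzler_on (oriented_edges E v) P \<and>
        (\<forall>a\<in>oriented_edges E v. \<forall>k.
           (\<Sum>i\<in>UNIV. incidence i a * J x $ i $ k)
             = (\<Sum>b\<in>oriented_edges E v. P a b * incidence k b)))
     \<longleftrightarrow>
     (\<forall>x y. trajectory f x \<longrightarrow> trajectory f y \<longrightarrow>
        (\<forall>a\<in>oriented_edges E v. Bt (x 0) a \<le> Bt (y 0) a) \<longrightarrow>
        (\<forall>t\<ge>0. \<forall>a\<in>oriented_edges E v. Bt (x t) a \<le> Bt (y t) a)))
    \<and>
    ((\<forall>x. \<exists>P. metzler_on (oriented_edges E v) P \<and>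
        (\<forall>a\<in>oriented_edges E v. \<forall>k.
           (\<Sum>i\<in>UNIV. incidence i a * J x $ i $ k)
             = (\<Sum>b\<in>oriented_edges E v. P a b * incidence k b)))
     \<longrightarrow>
     (\<forall>(c::real) (e::real ^ 'n). (\<forall>a\<in>oriented_edges E v. Bt e a > 0) \<longrightarrow>
        ((\<forall>x. \<forall>a\<in>oriented_edges E v. Bt (J x *v e) a \<le> - c * Bt e a)
         \<longleftrightarrow>
         (\<forall>x y. trajectory f x \<longrightarrow> trajectory f y \<longrightarrow>
            (\<forall>t\<ge>0. infnorm_on (oriented_edges E v) (\<lambda>a. (Bt (x t) a - Bt (y t) a) / Bt e a)
                   \<le> exp (- c * t) *
                     infnorm_on (oriented_edges E v) (\<lambda>a. (Bt (x 0) a - Bt (y 0) a) / Bt e a))))))"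
proof -
  let ?M = "oriented_edges E v"
  have edge: "\<And>a. a \<in> ?M \<Longrightarrow> fst a \<noteq> snd a"
    using graph unfolding undirected_graph_def oriented_edges_def by auto
  have dv: "\<And>a. a \<in> ?M \<Longrightarrow> Bt v a > 0"
  proof -
    fix a assume a: "a \<in> ?M"
    obtain i j where ij: "a = (i, j)" by (cases a)
    have "i \<noteq> j" using edge[OF a] ij by simp
    moreover have "v $ i > v $ j" using a ij unfolding oriented_edges_def by simp
    ultimately show "Bt v a > 0" using ij by (simp add: Bt_edge)
  qed
  have p1: "(\<forall>x. \<exists>P. metzler_on ?M P \<and>
        (\<forall>a\<in>?M. \<forall>k. (\<Sum>i\<in>UNIV. incidence i a * J x $ i $ k) = (\<Sum>b\<in>?M. P a b * incidence k b)))
     \<longleftrightarrow>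
     (\<forall>x y. trajectory f x \<longrightarrow> trajectory f y \<longrightarrow>
        (\<forall>a\<in>?M. Bt (x 0) a \<le> Bt (y 0) a) \<longrightarrow>
        (\<forall>t\<ge>0. \<forall>a\<in>?M. Bt (x t) a \<le> Bt (y t) a))" (is "?i \<longleftrightarrow> ?ii")
  proof
    assume met: ?i
    show ?ii
    proof (intro allI impI ballI)
      fix X Y and t :: real and a
      assume X: "trajectory f X" and Y: "trajectory f Y" and init: "\<forall>a\<in>?M. Bt (X 0) a \<le> Bt (Y 0) a"
        and t: "0 \<le> t" and a: "a \<in> ?M"
      show "Bt (X t) a \<le> Bt (Y t) a"
        by (rule dirA[OF deriv C1 edge dv met X Y init t a])
    qed
  next
    assume ii: ?ii
    show ?i by (rule dirB[OF deriv global ii])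
  qed
  have p2: "?i \<longrightarrow>
     (\<forall>(c::real) (e::real ^ 'n). (\<forall>a\<in>?M. Bt e a > 0) \<longrightarrow>
        ((\<forall>x. \<forall>a\<in>?M. Bt (J x *v e) a \<le> - c * Bt e a)
         \<longleftrightarrow>
         (\<forall>x y. trajectory f x \<longrightarrow> trajectory f y \<longrightarrow>
            (\<forall>t\<ge>0. infnorm_on ?M (\<lambda>a. (Bt (x t) a - Bt (y t) a) / Bt e a)
                   \<le> exp (- c * t) *
                     infnorm_on ?M (\<lambda>a. (Bt (x 0) a - Bt (y 0) a) / Bt e a)))))"
  proof (intro impI allI)
    fix c :: real and e :: "real ^ 'n"
    assume met: ?i and pos: "\<forall>a\<in>?M. Bt e a > 0"
    have dpos: "\<And>a. a \<in> ?M \<Longrightarrow> Bt e a > 0" using pos by blast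
    show "(\<forall>x. \<forall>a\<in>?M. Bt (J x *v e) a \<le> - c * Bt e a)
         \<longleftrightarrow>
         (\<forall>x y. trajectory f x \<longrightarrow> trajectory f y \<longrightarrow>
            (\<forall>t\<ge>0. infnorm_on ?M (\<lambda>a. (Bt (x t) a - Bt (y t) a) / Bt e a)
                   \<le> exp (- c * t) *
                     infnorm_on ?M (\<lambda>a. (Bt (x 0) a - Bt (y 0) a) / Bt e a)))"
      (is "?iii \<longleftrightarrow> ?iv")
    proof
      assume iii: ?iii
      show ?iv
      proof (intro allI impI)
        fix X Y and t :: real
        assume X: "trajectory f X" and Y: "trajectory f Y" and t: "0 \<le> t"
        show "infnorm_on ?M (\<lambda>a. (Bt (X t) a - Bt (Y t) a) / Bt e a)
                   \<le> exp (- c * t) * infnorm_on ?M (\<lambda>a. (Bt (X 0) a - Bt (Y 0) a) / Bt e a)"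
          by (rule dirC[OF deriv dpos met iii X Y t])
      qed
    next
      assume iv: ?iv
      show ?iii
      proof (intro allI ballI)
        fix x0 a assume a: "a \<in> ?M"
        show "Bt (J x0 *v e) a \<le> - c * Bt e a"
          by (rule dirD[OF deriv global dpos iv a])
      qed
    qed
  qed
  show ?thesis using p1 p2 by blast
qed

end
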